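(* Let $G$ be a $2$-connected cubic graph endowed with a perfect-matching $4$-cover $\mathcal{P}=\{P_1,P_2,P_3,P_4\}$. (i) If $R$ is a $2$-edge-cut of $G$, then either both edges of $R$ are simply covered or both are doubly covered; moreover, they belong to the same members of $\mathcal{P}$ (either one or two). (ii) If $R$ is a $3$-edge-cut of $G$, then either exactly one or all three edges of $R$ are doubly covered; in the latter case there is $P_j\in\mathcal{P}$ with $R\subseteq P_j$.
   Context: Graphs are finite; loops and multiple edges are allowed. A perfect-matching $4$-cover of a cubic graph $G$ is a set of four perfect matchings $P_1,\dots,P_4$ of $G$ whose union is $E(G)$. An edge is simply covered if it belongs to exactly one $P_i$ and doubly covered if it belongs to exactly two. (In such a cover every vertex is incident with exactly one doubly covered edge and no edge is covered three or more times.) *)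

theory Defs
  imports Main
begin

text \<open>Finite multigraphs (loops and parallel edges allowed): a vertex set V, an edge
set E and an incidence map ends assigning to every edge its set of end-vertices
(a singleton for a loop, a two-element set otherwise).\<close>

definition multigraph :: "'v set \<Rightarrow> 'e set \<Rightarrow> ('e \<Rightarrow> 'v set) \<Rightarrow> bool" where
  "multigraph V E ends \<longleftrightarrow> finite V \<and> finite E \<and>
     (\<forall>e\<in>E. ends e \<subseteq> V \<and> 1 \<le> card (ends e) \<and> card (ends e) \<le> 2)"

definition is_loop :: "('e \<Rightarrow> 'v set) \<Rightarrow> 'e \<Rightarrow> bool" where
  "is_loop ends e \<longleftrightarrow> card (ends e) = 1"

text \<open>Degree: loops count twice.\<close>
definition degree :: "'e set \<Rightarrow> ('e \<Rightarrow> 'v set) \<Rightarrow> 'v \<Rightarrow> nat" where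
  "degree E ends v = card {e\<in>E. v \<in> ends e} + card {e\<in>E. ends e = {v}}"

definition cubic :: "'v set \<Rightarrow> 'e set \<Rightarrow> ('e \<Rightarrow> 'v set) \<Rightarrow> bool" where
  "cubic V E ends \<longleftrightarrow> multigraph V E ends \<and> (\<forall>v\<in>V. degree E ends v = 3)"

definition adj_in :: "'v set \<Rightarrow> 'e set \<Rightarrow> ('e \<Rightarrow> 'v set) \<Rightarrow> ('v \<times> 'v) set" where
  "adj_in W E ends = {(u, w). \<exists>e\<in>E. ends e \<subseteq> W \<and> u \<in> ends e \<and> w \<in> ends e}"

definition connected_on :: "'v set \<Rightarrow> 'e set \<Rightarrow> ('e \<Rightarrow> 'v set) \<Rightarrow> bool" where
  "connected_on W E ends \<longleftrightarrow> W \<noteq> {} \<and> (\<forall>u\<in>W. \<forall>w\<in>W. (u, w) \<in> (adj_in W E ends)\<^sup>*)"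

definition two_connected :: "'v set \<Rightarrow> 'e set \<Rightarrow> ('e \<Rightarrow> 'v set) \<Rightarrow> bool" where
  "two_connected V E ends \<longleftrightarrow> card V > 2 \<and> connected_on V E ends \<and>
     (\<forall>v\<in>V. connected_on (V - {v}) E ends)"

definition perfect_matching :: "'v set \<Rightarrow> 'e set \<Rightarrow> ('e \<Rightarrow> 'v set) \<Rightarrow> 'e set \<Rightarrow> bool" where
  "perfect_matching V E ends M \<longleftrightarrow> M \<subseteq> E \<and> (\<forall>e\<in>M. \<not> is_loop ends e) \<and>
     (\<forall>v\<in>V. card {e\<in>M. v \<in> ends e} = 1)"

definition pm_4cover :: "'v set \<Rightarrow> 'e set \<Rightarrow> ('e \<Rightarrow> 'v set) \<Rightarrow> (nat \<Rightarrow> 'e set) \<Rightarrow> bool" where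
  "pm_4cover V E ends P \<longleftrightarrow> inj_on P {0..<4} \<and>
     (\<forall>i<4. perfect_matching V E ends (P i)) \<and> (\<Union>i<4. P i) = E"

definition cover_mult :: "(nat \<Rightarrow> 'e set) \<Rightarrow> 'e \<Rightarrow> nat" where
  "cover_mult P e = card {i. i < 4 \<and> e \<in> P i}"

definition simply_covered :: "(nat \<Rightarrow> 'e set) \<Rightarrow> 'e \<Rightarrow> bool" where
  "simply_covered P e \<longleftrightarrow> cover_mult P e = 1"

definition doubly_covered :: "(nat \<Rightarrow> 'e set) \<Rightarrow> 'e \<Rightarrow> bool" where
  "doubly_covered P e \<longleftrightarrow> cover_mult P e = 2"

definition edge_cut :: "'v set \<Rightarrow> 'e set \<Rightarrow> ('e \<Rightarrow> 'v set) \<Rightarrow> 'v set \<Rightarrow> 'e set" where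
  "edge_cut V E ends X = {e\<in>E. ends e \<inter> X \<noteq> {} \<and> ends e \<inter> (V - X) \<noteq> {}}"

definition is_k_edge_cut :: "'v set \<Rightarrow> 'e set \<Rightarrow> ('e \<Rightarrow> 'v set) \<Rightarrow> nat \<Rightarrow> 'e set \<Rightarrow> bool" where
  "is_k_edge_cut V E ends k R \<longleftrightarrow> (\<exists>X\<subseteq>V. R = edge_cut V E ends X) \<and> card R = k"

end

theory Submission
  imports Defs
begin

lemma card_filter_sum:
  "finite A \<Longrightarrow> card {x\<in>A. Q x} = (\<Sum>x\<in>A. if Q x then 1 else 0)"
  by (simp add: sum.inter_filter[symmetric])

lemma ends_pointwise:
  assumes "card (ends e) = 2" "ends e \<subseteq> V"
  shows "card (ends e \<inter> X) = 2 * (if ends e \<subseteq> X then 1 else 0) +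
     (if ends e \<inter> X \<noteq> {} \<and> ends e \<inter> (V - X) \<noteq> {} then 1 else 0)"
proof -
  obtain a b where ab: "ends e = {a,b}" "a \<noteq> b" using assms(1) card_2_iff by metis
  show ?thesis using ab assms(2) by (cases "a \<in> X"; cases "b \<in> X") auto
qed

lemma count_lemma:
  assumes "finite M" "\<forall>e\<in>M. card (ends e) = 2 \<and> ends e \<subseteq> V"
    "\<forall>v\<in>X. card {e\<in>M. v \<in> ends e} = k" "finite X"
  shows "k * card X = 2 * card {e\<in>M. ends e \<subseteq> X}
     + card {e\<in>M. ends e \<inter> X \<noteq> {} \<and> ends e \<inter> (V - X) \<noteq> {}}"
proof -
  have "k * card X = (\<Sum>v\<in>X. card {e\<in>M. v \<in> ends e})" using assms(3) by simp
  also have "\<dots> = (\<Sum>v\<in>X. \<Sum>e\<in>M. if v \<in> ends e then 1 else 0)"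
    using assms(1) by (simp add: card_filter_sum)
  also have "\<dots> = (\<Sum>e\<in>M. \<Sum>v\<in>X. if v \<in> ends e then 1 else 0)" by (rule sum.swap)
  also have "\<dots> = (\<Sum>e\<in>M. card (ends e \<inter> X))"
  proof (rule sum.cong[OF refl])
    fix e assume "e \<in> M"
    have "ends e \<inter> X = {v\<in>X. v \<in> ends e}" by auto
    then show "(\<Sum>v\<in>X. if v \<in> ends e then 1 else 0) = card (ends e \<inter> X)"
      using assms(4) by (simp add: card_filter_sum)
  qed
  also have "\<dots> = (\<Sum>e\<in>M. 2 * (if ends e \<subseteq> X then 1 else 0) +
     (if ends e \<inter> X \<noteq> {} \<and> ends e \<inter> (V - X) \<noteq> {} then 1 else 0))"
    using assms(2) ends_pointwise by (metis (no_types, lifting) sum.cong)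
  also have "\<dots> = 2 * card {e\<in>M. ends e \<subseteq> X}
     + card {e\<in>M. ends e \<inter> X \<noteq> {} \<and> ends e \<inter> (V - X) \<noteq> {}}"
    using assms(1) by (simp add: sum.distrib sum_distrib_left card_filter_sum)
  finally show ?thesis .
qed

lemma double_count:
  assumes "finite S"
  shows "(\<Sum>i<(4::nat). card (P i \<inter> S)) = (\<Sum>e\<in>S. cover_mult P e)"
proof -
  have "(\<Sum>i<(4::nat). card (P i \<inter> S)) = (\<Sum>i<(4::nat). \<Sum>e\<in>S. if e \<in> P i then 1 else 0)"
  proof (rule sum.cong[OF refl])
    fix i :: nat
    have "P i \<inter> S = {e\<in>S. e \<in> P i}" by auto
    then show "card (P i \<inter> S) = (\<Sum>e\<in>S. if e \<in> P i then 1 else 0)"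
      using assms by (simp add: card_filter_sum)
  qed
  also have "\<dots> = (\<Sum>e\<in>S. \<Sum>i<(4::nat). if e \<in> P i then 1 else 0)" by (rule sum.swap)
  also have "\<dots> = (\<Sum>e\<in>S. cover_mult P e)"
  proof (rule sum.cong[OF refl])
    fix e
    have eqq: "{i. i < 4 \<and> e \<in> P i} = {i\<in>{..<4}. e \<in> P i}" by auto
    show "(\<Sum>i<(4::nat). if e \<in> P i then 1 else 0) = cover_mult P e"
      unfolding cover_mult_def eqq by (rule card_filter_sum[symmetric]) simp
  qed
  finally show ?thesis .
qed


theorem lemma6p2:
  fixes V :: "'v set" and E :: "'e set" and ends :: "'e \<Rightarrow> 'v set"
    and P :: "nat \<Rightarrow> 'e set"
  assumes "cubic V E ends" and "two_connected V E ends" and "pm_4cover V E ends P"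
  shows "(\<forall>R. is_k_edge_cut V E ends 2 R \<longrightarrow>
            ((\<forall>e\<in>R. simply_covered P e) \<or> (\<forall>e\<in>R. doubly_covered P e)) \<and>
            (\<forall>e\<in>R. \<forall>f\<in>R. {i. i < 4 \<and> e \<in> P i} = {i. i < 4 \<and> f \<in> P i}))
       \<and> (\<forall>R. is_k_edge_cut V E ends 3 R \<longrightarrow>
            (card {e\<in>R. doubly_covered P e} = 1 \<or> (\<forall>e\<in>R. doubly_covered P e)) \<and>
            ((\<forall>e\<in>R. doubly_covered P e) \<longrightarrow> (\<exists>j<4. R \<subseteq> P j)))"
proof -
  have finV: "finite V" and finE: "finite E"
    and mg: "\<forall>e\<in>E. ends e \<subseteq> V \<and> 1 \<le> card (ends e) \<and> card (ends e) \<le> 2"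
    using assms(1) unfolding cubic_def multigraph_def by auto
  have deg: "\<forall>v\<in>V. degree E ends v = 3" using assms(1) unfolding cubic_def by auto
  have PM: "\<And>i. i < 4 \<Longrightarrow> perfect_matching V E ends (P i)" and U: "(\<Union>i<4. P i) = E"
    using assms(3) unfolding pm_4cover_def by auto
  have PE: "P i \<subseteq> E" if "i < 4" for i using PM[OF that] unfolding perfect_matching_def by simp
  have finP: "finite (P i)" if "i < 4" for i using PE[OF that] finE by (rule finite_subset)
  have ends2: "card (ends e) = 2 \<and> ends e \<subseteq> V" if "e \<in> E" for e
  proof -
    have "e \<in> (\<Union>i<4. P i)" using U that by simp
    then obtain i where i: "i < 4" "e \<in> P i" by auto
    have "\<not> is_loop ends e" using PM[OF i(1)] i(2) unfolding perfect_matching_def by auto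
    moreover have "ends e \<subseteq> V" "1 \<le> card (ends e)" "card (ends e) \<le> 2" using mg that by auto
    ultimately show ?thesis unfolding is_loop_def by linarith
  qed
  have noloop: "{e\<in>E. ends e = {v}} = {}" for v
  proof (rule ccontr)
    assume "{e\<in>E. ends e = {v}} \<noteq> {}"
    then obtain e where "e \<in> E" "ends e = {v}" by auto
    then show False using ends2[of e] by simp
  qed
  have deg3: "\<forall>v\<in>V. card {e\<in>E. v \<in> ends e} = 3"
    using deg noloop unfolding degree_def by simp
  have Pdeg: "\<And>i v. i < 4 \<Longrightarrow> v \<in> V \<Longrightarrow> card {e\<in>P i. v \<in> ends e} = 1"
    using PM unfolding perfect_matching_def by auto
  have mult_ge: "cover_mult P e \<ge> 1" if "e \<in> E" for e
  proof -
    have "e \<in> (\<Union>i<4. P i)" using U that by simp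
    then obtain i where i: "i < 4" "e \<in> P i" by auto
    have "{i. i < 4 \<and> e \<in> P i} \<noteq> {}" using i by auto
    moreover have "finite {i. i < 4 \<and> e \<in> P i}" by simp
    ultimately show ?thesis unfolding cover_mult_def
      by (simp add: Suc_le_eq card_gt_0_iff)
  qed
  have mult_le: "cover_mult P e \<le> 2" if "e \<in> E" for e
  proof -
    have "card (ends e) = 2" using ends2[OF that] by simp
    then obtain a b where ab: "ends e = {a,b}" using card_2_iff by metis
    have aV: "a \<in> V" using ends2[OF that] ab by auto
    define S where "S = {g\<in>E. a \<in> ends g}"
    have finS: "finite S" using finE S_def by simp
    have cS: "card S = 3" using deg3 aV S_def by simp
    have eS: "e \<in> S" using that ab S_def by simp
    have "(\<Sum>i<(4::nat). card (P i \<inter> S)) = (\<Sum>i<(4::nat). 1)"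
    proof (rule sum.cong[OF refl])
      fix i :: nat assume "i \<in> {..<4}"
      then have "P i \<inter> S = {g\<in>P i. a \<in> ends g}" using PE S_def by auto
      then show "card (P i \<inter> S) = 1" using Pdeg \<open>i \<in> {..<4}\<close> aV by simp
    qed
    then have s4: "(\<Sum>g\<in>S. cover_mult P g) = 4" using double_count[OF finS, of P] by simp
    have "(\<Sum>g\<in>S. cover_mult P g) = cover_mult P e + (\<Sum>g\<in>S-{e}. cover_mult P g)"
      using finS eS by (simp add: sum.remove)
    moreover have "(\<Sum>g\<in>S-{e}. cover_mult P g) \<ge> (\<Sum>g\<in>S-{e}. 1)"
      by (rule sum_mono) (use mult_ge S_def in auto)
    moreover have "(\<Sum>g\<in>S-{e}. (1::nat)) = 2" using cS eS finS by simp
    ultimately show ?thesis using s4 by linarith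
  qed
  have par: "odd (card X) \<longleftrightarrow> odd (card (P i \<inter> edge_cut V E ends X))"
    if "X \<subseteq> V" "i < 4" for X i
  proof -
    have "1 * card X = 2 * card {e\<in>P i. ends e \<subseteq> X}
       + card {e\<in>P i. ends e \<inter> X \<noteq> {} \<and> ends e \<inter> (V - X) \<noteq> {}}"
      by (rule count_lemma) (use finP[OF that(2)] PE[OF that(2)] ends2 Pdeg[OF that(2)] that(1)
          finite_subset[OF that(1) finV] in auto)
    moreover have "P i \<inter> edge_cut V E ends X = {e\<in>P i. ends e \<inter> X \<noteq> {} \<and> ends e \<inter> (V - X) \<noteq> {}}"
      using PE[OF that(2)] unfolding edge_cut_def by auto
    ultimately show ?thesis by simp
  qed
  have parE: "odd (card X) \<longleftrightarrow> odd (card (edge_cut V E ends X))"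
    if "X \<subseteq> V" for X
  proof -
    have "3 * card X = 2 * card {e\<in>E. ends e \<subseteq> X}
       + card {e\<in>E. ends e \<inter> X \<noteq> {} \<and> ends e \<inter> (V - X) \<noteq> {}}"
      by (rule count_lemma) (use finE ends2 deg3 that finite_subset[OF that finV] in auto)
    moreover have "edge_cut V E ends X = {e\<in>E. ends e \<inter> X \<noteq> {} \<and> ends e \<inter> (V - X) \<noteq> {}}"
      unfolding edge_cut_def by auto
    ultimately show ?thesis by (simp, presburger)
  qed
  have RE: "edge_cut V E ends X \<subseteq> E" for X unfolding edge_cut_def by auto
  show ?thesis
  proof (rule conjI; intro allI impI)
    fix R assume "is_k_edge_cut V E ends 2 R"
    then obtain X where X: "X \<subseteq> V" "R = edge_cut V E ends X" and cR: "card R = 2"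
      unfolding is_k_edge_cut_def by auto
    have finR: "finite R" using cR by (intro card_ge_0_finite) simp
    have evX: "even (card X)" using parE[OF X(1)] X(2) cR by simp
    have PR: "P i \<inter> R = {} \<or> P i \<inter> R = R" if "i < 4" for i
    proof -
      have ev: "even (card (P i \<inter> R))" using par[OF X(1) that] X(2) evX by simp
      have le: "card (P i \<inter> R) \<le> 2" using cR finR card_mono[of R "P i \<inter> R"] by auto
      have "card (P i \<inter> R) = 0 \<or> card (P i \<inter> R) = 2" using ev le
        by presburger
      then show ?thesis using finR cR card_subset_eq[of R "P i \<inter> R"] by auto
    qed
    have same: "\<forall>e\<in>R. \<forall>f\<in>R. {i. i < 4 \<and> e \<in> P i} = {i. i < 4 \<and> f \<in> P i}"
      using PR by blast
    obtain e0 where e0: "e0 \<in> R" using cR by fastforce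
    have mR: "cover_mult P e = cover_mult P e0" if "e \<in> R" for e
      unfolding cover_mult_def using same[rule_format, OF that e0] by simp
    have "e0 \<in> E" using e0 X(2) RE by auto
    then have "cover_mult P e0 = 1 \<or> cover_mult P e0 = 2" using mult_ge mult_le by fastforce
    then have "(\<forall>e\<in>R. simply_covered P e) \<or> (\<forall>e\<in>R. doubly_covered P e)"
      unfolding simply_covered_def doubly_covered_def using mR by auto
    then show "((\<forall>e\<in>R. simply_covered P e) \<or> (\<forall>e\<in>R. doubly_covered P e)) \<and>
      (\<forall>e\<in>R. \<forall>f\<in>R. {i. i < 4 \<and> e \<in> P i} = {i. i < 4 \<and> f \<in> P i})" using same by blast
  next
    fix R assume "is_k_edge_cut V E ends 3 R"
    then obtain X where X: "X \<subseteq> V" "R = edge_cut V E ends X" and cR: "card R = 3"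
      unfolding is_k_edge_cut_def by auto
    have finR: "finite R" using cR by (intro card_ge_0_finite) simp
    have odX: "odd (card X)" using parE[OF X(1)] X(2) cR by simp
    define c where "c i = card (P i \<inter> R)" for i
    have c13: "c i = 1 \<or> c i = 3" if "i < 4" for i
    proof -
      have od: "odd (c i)" using par[OF X(1) that] X(2) odX c_def by simp
      have le: "c i \<le> 3" using cR finR card_mono[of R "P i \<inter> R"] c_def by auto
      show ?thesis using od le
        by presburger
    qed
    have c3: "R \<subseteq> P i" if "c i = 3" for i
    proof -
      have "P i \<inter> R = R" using finR cR that c_def card_subset_eq[of R "P i \<inter> R"] by auto
      then show ?thesis by auto
    qed
    obtain a b d where abd: "R = {a,b,d}" "a \<noteq> b" "b \<noteq> d" "a \<noteq> d"
      using cR card_3_iff by metis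
    have inE: "a \<in> E" "b \<in> E" "d \<in> E" using abd X(2) RE by auto
    have sumeq: "c 0 + c 1 + c 2 + c 3 = cover_mult P a + cover_mult P b + cover_mult P d"
      using double_count[OF finR, of P] abd unfolding c_def by (simp add: eval_nat_numeral)
    have ma: "cover_mult P a = 1 \<or> cover_mult P a = 2" using mult_ge[OF inE(1)] mult_le[OF inE(1)] by linarith
    have mb: "cover_mult P b = 1 \<or> cover_mult P b = 2" using mult_ge[OF inE(2)] mult_le[OF inE(2)] by linarith
    have md: "cover_mult P d = 1 \<or> cover_mult P d = 2" using mult_ge[OF inE(3)] mult_le[OF inE(3)] by linarith
    have cc: "(c 0 = 1 \<or> c 0 = 3) \<and> (c 1 = 1 \<or> c 1 = 3) \<and> (c 2 = 1 \<or> c 2 = 3) \<and> (c 3 = 1 \<or> c 3 = 3)"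
      using c13 by simp
    have Dset: "{e\<in>R. doubly_covered P e} = (if cover_mult P a = 2 then {a} else {}) \<union>
       (if cover_mult P b = 2 then {b} else {}) \<union> (if cover_mult P d = 2 then {d} else {})"
      unfolding abd doubly_covered_def by auto
    have "card {e\<in>R. doubly_covered P e} = 1 \<or> (\<forall>e\<in>R. doubly_covered P e)"
    proof -
      have "even (c 0 + c 1 + c 2 + c 3)" using cc by presburger
      then have ev: "even (cover_mult P a + cover_mult P b + cover_mult P d)" by (simp only: sumeq[symmetric])
      show ?thesis unfolding Dset using abd ev ma mb md unfolding doubly_covered_def
        by (elim disjE) auto
    qed
    moreover have "(\<forall>e\<in>R. doubly_covered P e) \<longrightarrow> (\<exists>j<4. R \<subseteq> P j)"
    proof
      assume "\<forall>e\<in>R. doubly_covered P e"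
      then have "cover_mult P a = 2" "cover_mult P b = 2" "cover_mult P d = 2"
        using abd unfolding doubly_covered_def by auto
      then have "c 0 = 3 \<or> c 1 = 3 \<or> c 2 = 3 \<or> c 3 = 3" using sumeq cc by auto
      then show "\<exists>j<4. R \<subseteq> P j" by (elim disjE) (force dest: c3)+
    qed
    ultimately show "(card {e\<in>R. doubly_covered P e} = 1 \<or> (\<forall>e\<in>R. doubly_covered P e)) \<and>
            ((\<forall>e\<in>R. doubly_covered P e) \<longrightarrow> (\<exists>j<4. R \<subseteq> P j))" by blast
  qed
qed

end
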